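(* Let $(u_S,u_R)$ be an environment that is jointly-inclusive and satisfies partitional-unique-response and scant-indifferences. If commitment has no value, then the environment is felicitous.
   Context: $A=\{a_1,\dots,a_{|A|}\}$ and $\Omega$ are finite nonempty sets, $\mu_0$ a prior on $\Omega$ with $\mu_0(\omega)>0$ for all $\omega$, $M$ a finite message set with $|M|>\max\{|\Omega|,|A|\}$. An environment is a pair of functions $u_S,u_R:A\times\Omega\to[0,1]$. Messaging strategies $\sigma:\Omega\to\Delta M$, action strategies $\rho:M\to\Delta A$, $U_i(\sigma,\rho)=\sum_{\omega,m,a}\mu_0(\omega)\sigma(m|\omega)\rho(a|m)u_i(a,\omega)$. $(\sigma,\rho)$ is S-BR if $\sigma\in\arg\max_{\sigma'}U_S(\sigma',\rho)$ and R-BR if $\rho\in\arg\max_{\rho'}U_R(\sigma,\rho')$. The persuasion payoff is the maximum of $U_S$ over R-BR profiles; the cheap-talk payoff is the maximum over profiles that are S-BR and R-BR; commitment has no value if they are equal. Jointly-inclusive: for every $a\in A$ there is $\omega$ such that $u_S(a,\omega)>u_S(a',\omega)$ and $u_R(a,\omega)>u_R(a',\omega)$ for all $a'\neq a$. Partitional-unique-response: for every nonempty $\hat\Omega\subseteq\Omega$, $\arg\max_{a}\sum_{\omega\in\hat\Omega}\mu_0(\omega)u_R(a,\omega)$ is a singleton. Scant-indifferences: with $\mathbf u_S(a)=u_S(a,\cdot)\in\mathbb R^{|\Omega|}$, $\mathbf u_R(a)=u_R(a,\cdot)$, for each $i$ the expanded-indifference matrix $T^i$ has $|\Omega|$ columns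 and rows $\mathbf u_S(a_j)-\mathbf u_S(a_i)$ ($j\ne i$), $\mathbf u_R(a_j)-\mathbf u_R(a_i)$ ($j\ne i$), and the rows of the $|\Omega|\times|\Omega|$ identity; scant-indifferences holds if for each $i$ every matrix obtained from $T^i$ by deleting some rows has full rank. Felicitous: with $\Omega_i^{u_S}=\{\omega:a_i\in\arg\max_a u_S(a,\omega)\}$, for every $i$ with $\Omega_i^{u_S}\ne\emptyset$, $a_i\in\arg\max_a\sum_{\omega\in\Omega_i^{u_S}}\mu_0(\omega)u_R(a,\omega)$. *)

theory Defs
  imports "HOL-Analysis.Analysis"
begin

text \<open>Actions: finite type 'a; states: finite type 'w; messages: finite type 'm.\<close>

definition is_distr :: "('x::finite \<Rightarrow> real) \<Rightarrow> bool" where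
  "is_distr p \<longleftrightarrow> (\<forall>x. 0 \<le> p x) \<and> (\<Sum>x\<in>UNIV. p x) = 1"

definition msg_strat :: "('w::finite \<Rightarrow> 'm::finite \<Rightarrow> real) \<Rightarrow> bool" where
  "msg_strat \<sigma> \<longleftrightarrow> (\<forall>w. is_distr (\<sigma> w))"

definition act_strat :: "('m::finite \<Rightarrow> 'a::finite \<Rightarrow> real) \<Rightarrow> bool" where
  "act_strat \<rho> \<longleftrightarrow> (\<forall>m. is_distr (\<rho> m))"

definition payoff ::
  "('w::finite \<Rightarrow> real) \<Rightarrow> ('a::finite \<Rightarrow> 'w \<Rightarrow> real) \<Rightarrow>
   ('w \<Rightarrow> 'm::finite \<Rightarrow> real) \<Rightarrow> ('m \<Rightarrow> 'a \<Rightarrow> real) \<Rightarrow> real" where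
  "payoff \<mu> u \<sigma> \<rho> = (\<Sum>w\<in>UNIV. \<Sum>m\<in>UNIV. \<Sum>a\<in>UNIV. \<mu> w * \<sigma> w m * \<rho> m a * u a w)"

definition S_BR ::
  "('w::finite \<Rightarrow> real) \<Rightarrow> ('a::finite \<Rightarrow> 'w \<Rightarrow> real) \<Rightarrow>
   ('w \<Rightarrow> 'm::finite \<Rightarrow> real) \<Rightarrow> ('m \<Rightarrow> 'a \<Rightarrow> real) \<Rightarrow> bool" where
  "S_BR \<mu> uS \<sigma> \<rho> \<longleftrightarrow> msg_strat \<sigma> \<and>
     (\<forall>\<sigma>'. msg_strat \<sigma>' \<longrightarrow> payoff \<mu> uS \<sigma>' \<rho> \<le> payoff \<mu> uS \<sigma> \<rho>)"

definition R_BR ::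
  "('w::finite \<Rightarrow> real) \<Rightarrow> ('a::finite \<Rightarrow> 'w \<Rightarrow> real) \<Rightarrow>
   ('w \<Rightarrow> 'm::finite \<Rightarrow> real) \<Rightarrow> ('m \<Rightarrow> 'a \<Rightarrow> real) \<Rightarrow> bool" where
  "R_BR \<mu> uR \<sigma> \<rho> \<longleftrightarrow> act_strat \<rho> \<and>
     (\<forall>\<rho>'. act_strat \<rho>' \<longrightarrow> payoff \<mu> uR \<sigma> \<rho>' \<le> payoff \<mu> uR \<sigma> \<rho>)"

text \<open>Profiles range over pairs of strategies (sigma, rho) with both components valid strategies.
  The payoffs below are maxima in the paper; we write them as suprema (the maxima exist).\<close>

definition persuasion_payoff ::
  "('w::finite \<Rightarrow> real) \<Rightarrow> ('a::finite \<Rightarrow> 'w \<Rightarrow> real) \<Rightarrow> ('a \<Rightarrow> 'w \<Rightarrow> real) \<Rightarrow>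
   'm::finite itself \<Rightarrow> real" where
  "persuasion_payoff \<mu> uS uR (_::'m itself) =
     Sup {payoff \<mu> uS \<sigma> \<rho> | (\<sigma>::'w \<Rightarrow> 'm \<Rightarrow> real) \<rho>.
            msg_strat \<sigma> \<and> R_BR \<mu> uR \<sigma> \<rho>}"

definition cheap_talk_payoff ::
  "('w::finite \<Rightarrow> real) \<Rightarrow> ('a::finite \<Rightarrow> 'w \<Rightarrow> real) \<Rightarrow> ('a \<Rightarrow> 'w \<Rightarrow> real) \<Rightarrow>
   'm::finite itself \<Rightarrow> real" where
  "cheap_talk_payoff \<mu> uS uR (_::'m itself) =
     Sup {payoff \<mu> uS \<sigma> \<rho> | (\<sigma>::'w \<Rightarrow> 'm \<Rightarrow> real) \<rho>.
            S_BR \<mu> uS \<sigma> \<rho> \<and> R_BR \<mu> uR \<sigma> \<rho>}"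

definition commitment_no_value ::
  "('w::finite \<Rightarrow> real) \<Rightarrow> ('a::finite \<Rightarrow> 'w \<Rightarrow> real) \<Rightarrow> ('a \<Rightarrow> 'w \<Rightarrow> real) \<Rightarrow>
   'm::finite itself \<Rightarrow> bool" where
  "commitment_no_value \<mu> uS uR M \<longleftrightarrow>
     persuasion_payoff \<mu> uS uR M = cheap_talk_payoff \<mu> uS uR M"

definition argmax_set :: "('a \<Rightarrow> real) \<Rightarrow> 'a set" where
  "argmax_set f = {a. \<forall>a'. f a' \<le> f a}"

definition jointly_inclusive :: "('a \<Rightarrow> 'w \<Rightarrow> real) \<Rightarrow> ('a \<Rightarrow> 'w \<Rightarrow> real) \<Rightarrow> bool" where
  "jointly_inclusive uS uR \<longleftrightarrow>
     (\<forall>a. \<exists>w. \<forall>a'. a' \<noteq> a \<longrightarrow> uS a' w < uS a w \<and> uR a' w < uR a w)"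

definition partitional_unique_response ::
  "('w::finite \<Rightarrow> real) \<Rightarrow> ('a \<Rightarrow> 'w \<Rightarrow> real) \<Rightarrow> bool" where
  "partitional_unique_response \<mu> uR \<longleftrightarrow>
     (\<forall>W::'w set. W \<noteq> {} \<longrightarrow>
        is_singleton (argmax_set (\<lambda>a. \<Sum>w\<in>W. \<mu> w * uR a w)))"

text \<open>Rows of the expanded-indifference matrix T^i for action a: labels
  Inl (b, True) (b ~= a): row uS(b) - uS(a);  Inl (b, False) (b ~= a): row uR(b) - uR(a);
  Inr w: row e_w of the identity.\<close>

definition T_labels :: "'a \<Rightarrow> (('a \<times> bool) + 'w) set" where
  "T_labels a = {Inl (b, t) | b t. b \<noteq> a} \<union> range Inr"

definition T_row :: "('a \<Rightarrow> 'w::finite \<Rightarrow> real) \<Rightarrow> ('a \<Rightarrow> 'w \<Rightarrow> real) \<Rightarrow> 'a \<Rightarrow>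
    (('a \<times> bool) + 'w) \<Rightarrow> real ^ 'w" where
  "T_row uS uR a l = (case l of
       Inl (b, True) \<Rightarrow> (\<chi> w. uS b w - uS a w)
     | Inl (b, False) \<Rightarrow> (\<chi> w. uR b w - uR a w)
     | Inr w0 \<Rightarrow> axis w0 1)"

text \<open>The matrix with row set I has full rank iff its rank (dimension of its row space)
  equals min (number of rows, number of columns).\<close>

definition scant_indifferences ::
  "('a::finite \<Rightarrow> 'w::finite \<Rightarrow> real) \<Rightarrow> ('a \<Rightarrow> 'w \<Rightarrow> real) \<Rightarrow> bool" where
  "scant_indifferences uS uR \<longleftrightarrow>
     (\<forall>a. \<forall>I \<subseteq> T_labels a.
        dim (span (T_row uS uR a ` I)) = min (card I) CARD('w))"

definition felicitous ::
  "('w::finite \<Rightarrow> real) \<Rightarrow> ('a \<Rightarrow> 'w \<Rightarrow> real) \<Rightarrow> ('a \<Rightarrow> 'w \<Rightarrow> real) \<Rightarrow> bool" where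
  "felicitous \<mu> uS uR \<longleftrightarrow>
     (\<forall>a. let Wa = {w. a \<in> argmax_set (\<lambda>a'. uS a' w)} in
        Wa \<noteq> {} \<longrightarrow> a \<in> argmax_set (\<lambda>a'. \<Sum>w\<in>Wa. \<mu> w * uR a' w))"

end

theory Submission
  imports Defs
begin


definition pi_of :: "('w::finite \<Rightarrow> 'm::finite \<Rightarrow> real) \<Rightarrow> ('m \<Rightarrow> 'a::finite \<Rightarrow> real) \<Rightarrow> 'w \<Rightarrow> 'a \<Rightarrow> real" where
  "pi_of \<sigma> \<rho> = (\<lambda>w a. \<Sum>m\<in>UNIV. \<sigma> w m * \<rho> m a)"

definition opay :: "('w::finite \<Rightarrow> real) \<Rightarrow> ('a::finite \<Rightarrow> 'w \<Rightarrow> real) \<Rightarrow> ('w \<Rightarrow> 'a \<Rightarrow> real) \<Rightarrow> real" where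
  "opay \<mu> u \<pi> = (\<Sum>w\<in>UNIV. \<Sum>a\<in>UNIV. \<mu> w * \<pi> w a * u a w)"

definition obed :: "('w::finite \<Rightarrow> real) \<Rightarrow> ('a::finite \<Rightarrow> 'w \<Rightarrow> real) \<Rightarrow> ('w \<Rightarrow> 'a \<Rightarrow> real) \<Rightarrow> 'a \<Rightarrow> 'a \<Rightarrow> real" where
  "obed \<mu> uR \<pi> a b = (\<Sum>w\<in>UNIV. \<mu> w * \<pi> w a * (uR a w - uR b w))"

definition Xv :: "('w::finite \<Rightarrow> real) \<Rightarrow> ('a::finite \<Rightarrow> 'w \<Rightarrow> real) \<Rightarrow> ('w \<Rightarrow> 'm::finite \<Rightarrow> real) \<Rightarrow> 'm \<Rightarrow> 'a \<Rightarrow> real" where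
  "Xv \<mu> u \<sigma> m a = (\<Sum>w\<in>UNIV. \<mu> w * \<sigma> w m * u a w)"

definition vv :: "('a::finite \<Rightarrow> 'w \<Rightarrow> real) \<Rightarrow> ('m \<Rightarrow> 'a \<Rightarrow> real) \<Rightarrow> 'm \<Rightarrow> 'w \<Rightarrow> real" where
  "vv u \<rho> m w = (\<Sum>a\<in>UNIV. \<rho> m a * u a w)"

lemma payoff_alt1: "payoff \<mu> u \<sigma> \<rho> = (\<Sum>m\<in>UNIV. \<Sum>a\<in>UNIV. \<rho> m a * Xv \<mu> u \<sigma> m a)"
proof -
  have "payoff \<mu> u \<sigma> \<rho> = (\<Sum>m\<in>UNIV. \<Sum>w\<in>UNIV. \<Sum>a\<in>UNIV. \<mu> w * \<sigma> w m * \<rho> m a * u a w)"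
    unfolding payoff_def by (rule sum.swap)
  also have "\<dots> = (\<Sum>m\<in>UNIV. \<Sum>a\<in>UNIV. \<Sum>w\<in>UNIV. \<mu> w * \<sigma> w m * \<rho> m a * u a w)"
    by (rule sum.cong[OF refl], rule sum.swap)
  also have "\<dots> = (\<Sum>m\<in>UNIV. \<Sum>a\<in>UNIV. \<rho> m a * Xv \<mu> u \<sigma> m a)"
    unfolding Xv_def by (simp add: sum_distrib_left algebra_simps)
  finally show ?thesis .
qed

lemma payoff_alt2: "payoff \<mu> u \<sigma> \<rho> = (\<Sum>w\<in>UNIV. \<mu> w * (\<Sum>m\<in>UNIV. \<sigma> w m * vv u \<rho> m w))"
  unfolding payoff_def vv_def
  by (simp add: sum_distrib_left algebra_simps)

lemma payoff_pi: "payoff \<mu> u \<sigma> \<rho> = opay \<mu> u (pi_of \<sigma> \<rho>)"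
  unfolding payoff_def opay_def pi_of_def
  apply (rule sum.cong, simp)
  apply (subst sum.swap)
  apply (simp add: sum_distrib_left sum_distrib_right)
  apply (rule sum.cong, simp)
  apply (rule sum.cong, simp)
  by (simp add: algebra_simps)

lemma obed_pi: "obed \<mu> uR (pi_of \<sigma> \<rho>) a b = (\<Sum>m\<in>UNIV. \<rho> m a * (Xv \<mu> uR \<sigma> m a - Xv \<mu> uR \<sigma> m b))"
  unfolding obed_def pi_of_def Xv_def
  apply (simp add: sum_distrib_left sum_distrib_right sum_subtractf[symmetric] right_diff_distrib)
  apply (subst sum.swap)
  apply (rule sum.cong, simp)
  apply (rule sum.cong, simp)
  by (simp add: algebra_simps)

lemma payoff_lin_rho: "payoff \<mu> u \<sigma> (\<lambda>m c. \<rho> m c + D m c) = payoff \<mu> u \<sigma> \<rho> + (\<Sum>m\<in>UNIV. \<Sum>c\<in>UNIV. D m c * Xv \<mu> u \<sigma> m c)"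
  unfolding payoff_alt1 by (simp add: algebra_simps sum.distrib)

lemma payoff_lin_sigma: "payoff \<mu> u (\<lambda>w m. \<sigma> w m + D w m) \<rho> = payoff \<mu> u \<sigma> \<rho> + (\<Sum>w\<in>UNIV. \<mu> w * (\<Sum>m\<in>UNIV. D w m * vv u \<rho> m w))"
  unfolding payoff_alt2 by (simp add: algebra_simps sum.distrib)

lemma sum_delta_diff:
  fixes f :: "'c::finite \<Rightarrow> real"
  shows "(\<Sum>c\<in>UNIV. k * ((if c = b then 1 else 0) - (if c = a then 1 else 0)) * f c) = k * (f b - f a)"
proof -
  have "(\<Sum>c\<in>UNIV. k * ((if c = b then 1 else 0) - (if c = a then 1 else 0)) * f c) = (\<Sum>c\<in>UNIV. (if c = b then k * f c else 0) - (if c = a then k * f c else 0))"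
    by (rule sum.cong) auto
  also have "\<dots> = k * f b - k * f a" by (simp only: sum_subtractf sum.delta) simp
  finally show ?thesis by (simp add: algebra_simps)
qed

lemma R_BR_msg:
  assumes R: "R_BR \<mu> uR \<sigma> \<rho>" and pos: "\<rho> m a > 0"
  shows "Xv \<mu> uR \<sigma> m b \<le> Xv \<mu> uR \<sigma> m a"
proof (cases "a = b")
  case True then show ?thesis by simp
next
  case False
  define D where "D = (\<lambda>m' c. if m' = m then \<rho> m a * ((if c = b then 1 else 0) - (if c = a then 1 else 0)) else (0::real))"
  have as: "act_strat \<rho>" using R unfolding R_BR_def by blast
  have "act_strat (\<lambda>m c. \<rho> m c + D m c)"
    unfolding act_strat_def is_distr_def
  proof (intro allI conjI)
    fix m' c
    show "0 \<le> \<rho> m' c + D m' c"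
      using as False pos unfolding act_strat_def is_distr_def D_def
      by (auto simp: less_imp_le add_nonneg_nonneg)
  next
    fix m'
    have "(\<Sum>c\<in>UNIV. D m' c) = 0"
      unfolding D_def using sum_delta_diff[of "\<rho> m a" b a "\<lambda>_. 1"] by (cases "m' = m") simp_all
    then show "(\<Sum>c\<in>UNIV. \<rho> m' c + D m' c) = 1"
      using as unfolding act_strat_def is_distr_def by (simp add: sum.distrib)
  qed
  then have "payoff \<mu> uR \<sigma> (\<lambda>m c. \<rho> m c + D m c) \<le> payoff \<mu> uR \<sigma> \<rho>"
    using R unfolding R_BR_def by blast
  moreover have "(\<Sum>m'\<in>UNIV. \<Sum>c\<in>UNIV. D m' c * Xv \<mu> uR \<sigma> m' c) = \<rho> m a * (Xv \<mu> uR \<sigma> m b - Xv \<mu> uR \<sigma> m a)"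
  proof -
    have "(\<Sum>m'\<in>UNIV. \<Sum>c\<in>UNIV. D m' c * Xv \<mu> uR \<sigma> m' c) = (\<Sum>c\<in>UNIV. D m c * Xv \<mu> uR \<sigma> m c)"
      by (subst sum.remove[of UNIV m]) (auto simp: D_def)
    also have "\<dots> = \<rho> m a * (Xv \<mu> uR \<sigma> m b - Xv \<mu> uR \<sigma> m a)"
      unfolding D_def using sum_delta_diff[of "\<rho> m a" b a "Xv \<mu> uR \<sigma> m"] by simp
    finally show ?thesis .
  qed
  ultimately have "\<rho> m a * (Xv \<mu> uR \<sigma> m b - Xv \<mu> uR \<sigma> m a) \<le> 0"
    by (simp add: payoff_lin_rho)
  then show ?thesis using pos by (simp add: mult_le_0_iff)
qed

lemma S_BR_state:
  assumes S: "S_BR \<mu> uS \<sigma> \<rho>" and mpos: "\<mu> w > 0" and pos: "\<sigma> w m > 0"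
  shows "vv uS \<rho> m' w \<le> vv uS \<rho> m w"
proof (cases "m = m'")
  case True then show ?thesis by simp
next
  case False
  define D where "D = (\<lambda>w' c. if w' = w then \<sigma> w m * ((if c = m' then 1 else 0) - (if c = m then 1 else 0)) else (0::real))"
  have ms: "msg_strat \<sigma>" using S unfolding S_BR_def by blast
  have "msg_strat (\<lambda>w c. \<sigma> w c + D w c)"
    unfolding msg_strat_def is_distr_def
  proof (intro allI conjI)
    fix w' c
    show "0 \<le> \<sigma> w' c + D w' c"
      using ms False pos unfolding msg_strat_def is_distr_def D_def
      by (auto simp: less_imp_le add_nonneg_nonneg)
  next
    fix w'
    have "(\<Sum>c\<in>UNIV. D w' c) = 0"
      unfolding D_def using sum_delta_diff[of "\<sigma> w m" m' m "\<lambda>_. 1"] by (cases "w' = w") simp_all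
    then show "(\<Sum>c\<in>UNIV. \<sigma> w' c + D w' c) = 1"
      using ms unfolding msg_strat_def is_distr_def by (simp add: sum.distrib)
  qed
  then have "payoff \<mu> uS (\<lambda>w c. \<sigma> w c + D w c) \<rho> \<le> payoff \<mu> uS \<sigma> \<rho>"
    using S unfolding S_BR_def by blast
  moreover have "(\<Sum>w'\<in>UNIV. \<mu> w' * (\<Sum>c\<in>UNIV. D w' c * vv uS \<rho> c w')) = \<mu> w * (\<sigma> w m * (vv uS \<rho> m' w - vv uS \<rho> m w))"
  proof -
    have "(\<Sum>w'\<in>UNIV. \<mu> w' * (\<Sum>c\<in>UNIV. D w' c * vv uS \<rho> c w')) = \<mu> w * (\<Sum>c\<in>UNIV. D w c * vv uS \<rho> c w)"
      by (subst sum.remove[of UNIV w]) (auto simp: D_def)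
    also have "\<dots> = \<mu> w * (\<sigma> w m * (vv uS \<rho> m' w - vv uS \<rho> m w))"
      unfolding D_def using sum_delta_diff[of "\<sigma> w m" m' m "\<lambda>c. vv uS \<rho> c w"] by simp
    finally show ?thesis .
  qed
  ultimately have "\<mu> w * (\<sigma> w m * (vv uS \<rho> m' w - vv uS \<rho> m w)) \<le> 0"
    by (simp add: payoff_lin_sigma)
  then show ?thesis using pos mpos by (simp add: mult_le_0_iff)
qed

lemma sum_push:
  fixes f :: "'a::finite \<Rightarrow> 'm::finite" and p :: "'a \<Rightarrow> real"
  shows "(\<Sum>m\<in>UNIV. (\<Sum>a\<in>UNIV. if f a = m then p a else 0) * G m) = (\<Sum>a\<in>UNIV. p a * G (f a))"
proof -
  have "(\<Sum>m\<in>UNIV. (\<Sum>a\<in>UNIV. if f a = m then p a else 0) * G m) = (\<Sum>m\<in>UNIV. \<Sum>a\<in>UNIV. if f a = m then p a * G m else 0)"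
    by (simp add: sum_distrib_right if_distrib[of "\<lambda>x. x * _"] cong: if_cong)
  also have "\<dots> = (\<Sum>a\<in>UNIV. \<Sum>m\<in>UNIV. if f a = m then p a * G m else 0)"
    by (rule sum.swap)
  also have "\<dots> = (\<Sum>a\<in>UNIV. p a * G (f a))"
    by (rule sum.cong[OF refl]) (simp add: sum.delta eq_commute[of "f _"])
  finally show ?thesis .
qed

lemma direct_rec:
  fixes \<pi> :: "'w::finite \<Rightarrow> 'a::finite \<Rightarrow> real" and \<mu> :: "'w \<Rightarrow> real"
  assumes card: "CARD('a) < CARD('m::finite)"
    and valid: "\<forall>w. is_distr (\<pi> w)"
    and ob: "\<forall>a b. 0 \<le> obed \<mu> uR \<pi> a b"
  shows "\<exists>(\<sigma>::'w \<Rightarrow> 'm \<Rightarrow> real) \<rho>. msg_strat \<sigma> \<and> R_BR \<mu> uR \<sigma> \<rho> \<and> payoff \<mu> uS \<sigma> \<rho> = opay \<mu> uS \<pi>"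
proof -
  obtain f :: "'a \<Rightarrow> 'm" where f: "inj f"
    using card_le_inj[of "UNIV::'a set" "UNIV::'m set"] card by auto
  define a0 :: 'a where "a0 = undefined"
  define \<sigma> :: "'w \<Rightarrow> 'm \<Rightarrow> real" where "\<sigma> = (\<lambda>w m. \<Sum>a\<in>UNIV. if f a = m then \<pi> w a else 0)"
  define \<rho> :: "'m \<Rightarrow> 'a \<Rightarrow> real" where "\<rho> = (\<lambda>m c. if m \<in> range f then (if f c = m then 1 else 0) else (if c = a0 then 1 else 0))"
  have rho_f: "\<rho> (f a) c = (if c = a then 1 else 0)" for a c
    using f unfolding \<rho>_def by (auto dest: injD)
  have pi_eq: "pi_of \<sigma> \<rho> = \<pi>"
  proof (intro ext)
    fix w c
    have "pi_of \<sigma> \<rho> w c = (\<Sum>a\<in>UNIV. \<pi> w a * \<rho> (f a) c)"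
      unfolding pi_of_def \<sigma>_def by (rule sum_push)
    also have "\<dots> = \<pi> w c" by (simp add: rho_f if_distrib[of "\<lambda>x. _ * x"] cong: if_cong)
    finally show "pi_of \<sigma> \<rho> w c = \<pi> w c" .
  qed
  have ms: "msg_strat \<sigma>"
    unfolding msg_strat_def is_distr_def
  proof (intro allI conjI)
    fix w m show "0 \<le> \<sigma> w m" using valid unfolding \<sigma>_def is_distr_def by (auto intro: sum_nonneg)
  next
    fix w
    have "(\<Sum>m\<in>UNIV. \<sigma> w m) = (\<Sum>m\<in>UNIV. \<sigma> w m * 1)" by simp
    also have "\<dots> = (\<Sum>a\<in>UNIV. \<pi> w a * 1)" unfolding \<sigma>_def by (rule sum_push)
    also have "\<dots> = 1" using valid unfolding is_distr_def by simp
    finally show "(\<Sum>m\<in>UNIV. \<sigma> w m) = 1" .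
  qed
  have as: "act_strat \<rho>"
    unfolding act_strat_def is_distr_def
  proof (intro allI conjI)
    fix m c show "0 \<le> \<rho> m c" unfolding \<rho>_def by auto
  next
    fix m
    show "(\<Sum>c\<in>UNIV. \<rho> m c) = 1"
    proof (cases "m \<in> range f")
      case True
      then obtain a where "m = f a" by auto
      then show ?thesis by (simp add: rho_f)
    next
      case False
      then show ?thesis unfolding \<rho>_def by simp
    qed
  qed
  have Rpay: "payoff \<mu> uR \<sigma> \<rho>' = (\<Sum>a\<in>UNIV. \<Sum>c\<in>UNIV. \<rho>' (f a) c * (\<Sum>w\<in>UNIV. \<mu> w * \<pi> w a * uR c w))" for \<rho>'
  proof -
    have "payoff \<mu> uR \<sigma> \<rho>' = (\<Sum>w\<in>UNIV. \<mu> w * (\<Sum>a\<in>UNIV. \<pi> w a * vv uR \<rho>' (f a) w))"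
      unfolding payoff_alt2 \<sigma>_def by (simp only: sum_push)
    also have "\<dots> = (\<Sum>w\<in>UNIV. \<Sum>a\<in>UNIV. \<Sum>c\<in>UNIV. \<rho>' (f a) c * (\<mu> w * \<pi> w a * uR c w))"
      unfolding vv_def by (simp add: sum_distrib_left algebra_simps)
    also have "\<dots> = (\<Sum>a\<in>UNIV. \<Sum>w\<in>UNIV. \<Sum>c\<in>UNIV. \<rho>' (f a) c * (\<mu> w * \<pi> w a * uR c w))"
      by (rule sum.swap)
    also have "\<dots> = (\<Sum>a\<in>UNIV. \<Sum>c\<in>UNIV. \<Sum>w\<in>UNIV. \<rho>' (f a) c * (\<mu> w * \<pi> w a * uR c w))"
      by (rule sum.cong[OF refl], rule sum.swap)
    also have "\<dots> = (\<Sum>a\<in>UNIV. \<Sum>c\<in>UNIV. \<rho>' (f a) c * (\<Sum>w\<in>UNIV. \<mu> w * \<pi> w a * uR c w))"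
      by (simp add: sum_distrib_left)
    finally show ?thesis .
  qed
  have Y: "(\<Sum>w\<in>UNIV. \<mu> w * \<pi> w a * uR c w) \<le> (\<Sum>w\<in>UNIV. \<mu> w * \<pi> w a * uR a w)" for a c
  proof -
    have "0 \<le> obed \<mu> uR \<pi> a c" using ob by blast
    then show ?thesis unfolding obed_def by (simp add: right_diff_distrib sum_subtractf)
  qed
  have R: "R_BR \<mu> uR \<sigma> \<rho>"
    unfolding R_BR_def
  proof (intro conjI allI impI)
    show "act_strat \<rho>" by (rule as)
  next
    fix \<rho>' :: "'m \<Rightarrow> 'a \<Rightarrow> real"
    assume as': "act_strat \<rho>'"
    have "payoff \<mu> uR \<sigma> \<rho>' \<le> (\<Sum>a\<in>UNIV. \<Sum>c\<in>UNIV. \<rho>' (f a) c * (\<Sum>w\<in>UNIV. \<mu> w * \<pi> w a * uR a w))"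
      unfolding Rpay
      by (intro sum_mono mult_left_mono Y) (use as' in \<open>auto simp: act_strat_def is_distr_def\<close>)
    also have "\<dots> = (\<Sum>a\<in>UNIV. (\<Sum>w\<in>UNIV. \<mu> w * \<pi> w a * uR a w))"
      using as' by (simp add: sum_distrib_right[symmetric] act_strat_def is_distr_def)
    also have "\<dots> = payoff \<mu> uR \<sigma> \<rho>"
      unfolding payoff_pi pi_eq opay_def by (rule sum.swap)
    finally show "payoff \<mu> uR \<sigma> \<rho>' \<le> payoff \<mu> uR \<sigma> \<rho>" .
  qed
  show ?thesis
    by (intro exI[of _ \<sigma>] exI[of _ \<rho>]) (simp add: ms R payoff_pi pi_eq)
qed




lemma scant_dir:
  fixes uS uR :: "'a::finite \<Rightarrow> 'w::finite \<Rightarrow> real"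
  assumes SI: "scant_indifferences uS uR"
    and IT: "I \<subseteq> T_labels a0" and l1: "l1 \<in> I"
    and x0: "x \<noteq> 0" and xo: "\<forall>l\<in>I. x \<bullet> T_row uS uR a0 l = 0"
  shows "\<exists>d. (\<forall>l\<in>I - {l1}. d \<bullet> T_row uS uR a0 l = 0) \<and> d \<bullet> T_row uS uR a0 l1 > 0"
proof -
  define R where "R = T_row uS uR a0"
  have fin: "finite I" by (rule finite_subset[of _ UNIV]) auto
  have dimI: "dim (span (R ` I)) = min (card I) CARD('w)"
    using SI IT unfolding scant_indifferences_def R_def by blast
  have "span (R ` I) \<subseteq> {y. x \<bullet> y = 0}"
    by (rule span_minimal) (use xo in \<open>auto simp: R_def subspace_hyperplane\<close>)
  then have "dim (span (R ` I)) \<le> dim {y. x \<bullet> y = 0}" by (rule dim_subset)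
  also have "\<dots> = DIM(real^'w) - 1" using x0 by (rule dim_hyperplane)
  finally have "dim (span (R ` I)) \<le> CARD('w) - 1" by (simp add: DIM_cart)
  moreover have "0 < CARD('w)" by simp
  ultimately have "dim (span (R ` I)) < CARD('w)" by linarith
  then have dI: "dim (span (R ` I)) = card I" using dimI by simp
  define S' where "S' = R ` (I - {l1})"
  have nin: "R l1 \<notin> span S'"
  proof
    assume "R l1 \<in> span S'"
    then have "span (insert (R l1) S') = span S'" by (rule span_redundant)
    moreover have "insert (R l1) S' = R ` I" unfolding S'_def using l1 by auto
    ultimately have "dim (span (R ` I)) = dim (span S')" by simp
    also have "\<dots> \<le> card S'" unfolding dim_span S'_def by (rule dim_le_card') (use fin in auto)
    also have "\<dots> \<le> card (I - {l1})" unfolding S'_def by (rule card_image_le) (use fin in auto)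
    also have "\<dots> < card I" proof -
      have "0 < card I" using fin l1 card_gt_0_iff by blast
      then show ?thesis using fin l1 by simp
    qed
    finally show False using dI by simp
  qed
  obtain y z where yz: "y \<in> span S'" "\<And>v. v \<in> span S' \<Longrightarrow> orthogonal z v" "R l1 = y + z"
    by (rule orthogonal_subspace_decomp_exists[of S' "R l1"]) blast
  have zy: "z \<bullet> y = 0" using yz(1,2) by (simp add: orthogonal_def)
  have "z \<noteq> 0" using nin yz by auto
  then have "z \<bullet> R l1 > 0" using zy yz(3) by (simp add: inner_add_right)
  moreover have "\<forall>l\<in>I - {l1}. z \<bullet> R l = 0"
  proof
    fix l assume "l \<in> I - {l1}"
    then have "R l \<in> span S'" unfolding S'_def by (intro span_base) auto
    then show "z \<bullet> R l = 0" using yz(2) by (simp add: orthogonal_def)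
  qed
  ultimately show ?thesis unfolding R_def by blast
qed

lemma payoff_le_total:
  assumes ms: "msg_strat \<sigma>" and as: "act_strat \<rho>" and mu: "\<forall>w. 0 \<le> \<mu> w"
    and u: "\<forall>a w. u a w \<le> 1"
  shows "payoff \<mu> u \<sigma> \<rho> \<le> (\<Sum>w\<in>UNIV. \<mu> w)"
proof -
  have v1: "vv u \<rho> m w \<le> 1" for m w
  proof -
    have "vv u \<rho> m w \<le> (\<Sum>a\<in>UNIV. \<rho> m a * 1)"
      unfolding vv_def by (intro sum_mono mult_left_mono) (use as u in \<open>auto simp: act_strat_def is_distr_def\<close>)
    also have "\<dots> = 1" using as by (simp add: act_strat_def is_distr_def)
    finally show ?thesis .
  qed
  have "payoff \<mu> u \<sigma> \<rho> \<le> (\<Sum>w\<in>UNIV. \<mu> w * (\<Sum>m\<in>UNIV. \<sigma> w m * 1))"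
    unfolding payoff_alt2
    by (intro sum_mono mult_left_mono v1) (use ms mu in \<open>auto simp: msg_strat_def is_distr_def\<close>)
  also have "\<dots> = (\<Sum>w\<in>UNIV. \<mu> w)" using ms by (simp add: msg_strat_def is_distr_def)
  finally show ?thesis .
qed

lemma pers_bound:
  fixes \<pi> :: "'w::finite \<Rightarrow> 'a::finite \<Rightarrow> real" and \<mu> :: "'w \<Rightarrow> real"
    and M :: "'m::finite itself"
  assumes card: "CARD('a) < CARD('m)"
    and valid: "\<forall>w. is_distr (\<pi> w)"
    and ob: "\<forall>a b. 0 \<le> obed \<mu> uR \<pi> a b"
    and mu: "\<forall>w. 0 \<le> \<mu> w" and u: "\<forall>a w. uS a w \<le> 1"
  shows "opay \<mu> uS \<pi> \<le> persuasion_payoff \<mu> uS uR M"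
proof -
  obtain \<sigma> :: "'w \<Rightarrow> 'm \<Rightarrow> real" and \<rho> where sr: "msg_strat \<sigma>" "R_BR \<mu> uR \<sigma> \<rho>" "payoff \<mu> uS \<sigma> \<rho> = opay \<mu> uS \<pi>"
    using direct_rec[OF card valid ob] by blast
  have bdd: "bdd_above {payoff \<mu> uS \<sigma> \<rho> | (\<sigma>::'w \<Rightarrow> 'm \<Rightarrow> real) \<rho>. msg_strat \<sigma> \<and> R_BR \<mu> uR \<sigma> \<rho>}"
    unfolding bdd_above_def
    by (rule exI[of _ "\<Sum>w\<in>UNIV. \<mu> w"]) (auto intro!: payoff_le_total simp: R_BR_def mu u)
  have "payoff \<mu> uS \<sigma> \<rho> \<le> persuasion_payoff \<mu> uS uR M"
    unfolding persuasion_payoff_def by (rule cSup_upper[OF _ bdd]) (use sr in blast)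
  then show ?thesis using sr by simp
qed




lemma row_S: "d \<bullet> T_row uS uR a (Inl (b, True)) = (\<Sum>w\<in>UNIV. d $ w * (uS b w - uS a w))"
  unfolding T_row_def inner_vec_def by simp

lemma row_R: "d \<bullet> T_row uS uR a (Inl (b, False)) = (\<Sum>w\<in>UNIV. d $ w * (uR b w - uR a w))"
  unfolding T_row_def inner_vec_def by simp

lemma row_I: "d \<bullet> T_row uS uR a (Inr w0) = d $ w0"
  unfolding T_row_def by (simp add: cart_eq_inner_axis)

lemma distinct_uS:
  fixes uS uR :: "'a::finite \<Rightarrow> 'w::finite \<Rightarrow> real"
  assumes SI: "scant_indifferences uS uR" and ne: "a \<noteq> b"
  shows "uS a w \<noteq> uS b w"
proof
  assume eq: "uS a w = uS b w"
  define I where "I = insert (Inl (b, True)) (Inr ` (UNIV - {w}))"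
  have IT: "I \<subseteq> T_labels a" unfolding I_def T_labels_def using ne by auto
  have x0: "(axis w 1 :: real^'w) \<noteq> 0" by (simp add: axis_eq_0_iff)
  have xo: "\<forall>l\<in>I. axis w 1 \<bullet> T_row uS uR a l = 0"
  proof
    fix l assume "l \<in> I"
    then show "axis w 1 \<bullet> T_row uS uR a l = 0"
      unfolding I_def
    proof
      assume "l = Inl (b, True)"
      then show ?thesis using eq
        by (simp add: row_S inner_commute[of "axis w 1"] axis_def if_distrib[of "\<lambda>x. x * _"] cong: if_cong)
    next
      assume "l \<in> Inr ` (UNIV - {w})"
      then obtain w' where "l = Inr w'" "w' \<noteq> w" by auto
      then show ?thesis by (simp add: row_I axis_def)
    qed
  qed
  obtain d where d: "\<forall>l\<in>I - {Inl (b, True)}. d \<bullet> T_row uS uR a l = 0" "d \<bullet> T_row uS uR a (Inl (b, True)) > 0"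
    using scant_dir[OF SI IT _ x0 xo] unfolding I_def by blast
  have dz: "d $ w' = 0" if "w' \<noteq> w" for w'
  proof -
    have "Inr w' \<in> I - {Inl (b, True)}" unfolding I_def using that by auto
    then have "d \<bullet> T_row uS uR a (Inr w') = 0" using d(1) by blast
    then show ?thesis by (simp add: row_I)
  qed
  have "d \<bullet> T_row uS uR a (Inl (b, True)) = (\<Sum>w'\<in>UNIV. if w' = w then d $ w * (uS b w - uS a w) else 0)"
    unfolding row_S by (rule sum.cong) (auto simp: dz)
  also have "\<dots> = 0" using eq by simp
  finally show False using d(2) by simp
qed




lemma opay_pert: "opay \<mu> u (\<lambda>w x. \<pi> w x + D w x) = opay \<mu> u \<pi> + (\<Sum>w\<in>UNIV. \<Sum>x\<in>UNIV. \<mu> w * D w x * u x w)"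
  unfolding opay_def by (simp add: algebra_simps sum.distrib)

lemma obed_pert: "obed \<mu> uR (\<lambda>w x. \<pi> w x + D w x) a b = obed \<mu> uR \<pi> a b + (\<Sum>w\<in>UNIV. \<mu> w * D w a * (uR a w - uR b w))"
  unfolding obed_def by (simp add: algebra_simps sum.distrib[symmetric])

lemma ev_pos:
  fixes c s :: real
  assumes "0 < c \<or> (0 \<le> c \<and> 0 \<le> s)"
  shows "\<forall>\<^sub>F e in at_right 0. 0 \<le> c + e * s"
  using assms
proof
  assume c: "0 < c"
  show ?thesis unfolding eventually_at_right_field
  proof (intro exI[of _ "c / (\<bar>s\<bar> + 1)"] conjI allI impI)
    show "0 < c / (\<bar>s\<bar> + 1)" using c by simp
  next
    fix y :: real assume y: "0 < y" "y < c / (\<bar>s\<bar> + 1)"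
    then have "y * (\<bar>s\<bar> + 1) < c" by (simp add: pos_less_divide_eq)
    moreover have "- (y * s) \<le> y * \<bar>s\<bar>" using y(1) by (metis abs_ge_minus_self abs_ge_self mult_left_mono less_imp_le mult_minus_right)
    moreover have "y * (\<bar>s\<bar> + 1) = y * \<bar>s\<bar> + y" by (simp add: algebra_simps)
    ultimately show "0 \<le> c + y * s" using y(1) by linarith
  qed
next
  assume cs: "0 \<le> c \<and> 0 \<le> s"
  show ?thesis unfolding eventually_at_right_field
    by (rule exI[of _ 1]) (use cs in auto)
qed

lemma ev_witness:
  assumes "\<forall>\<^sub>F e in at_right (0::real). P e"
  shows "\<exists>e>0. P e"
proof -
  obtain b where b: "b > 0" "\<forall>y>0. y < b \<longrightarrow> P y" using assms unfolding eventually_at_right_field by auto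
  then show ?thesis by (intro exI[of _ "b/2"]) auto
qed

lemma pi_valid:
  assumes "msg_strat \<sigma>" "act_strat \<rho>"
  shows "\<forall>w. is_distr (pi_of \<sigma> \<rho> w)"
  unfolding is_distr_def
proof (intro allI conjI)
  fix w a show "0 \<le> pi_of \<sigma> \<rho> w a" using assms unfolding pi_of_def msg_strat_def act_strat_def is_distr_def
    by (auto intro!: sum_nonneg)
next
  fix w
  have "(\<Sum>a\<in>UNIV. pi_of \<sigma> \<rho> w a) = (\<Sum>m\<in>UNIV. \<sigma> w m * (\<Sum>a\<in>UNIV. \<rho> m a))"
    unfolding pi_of_def by (subst sum.swap) (simp add: sum_distrib_left)
  also have "\<dots> = 1" using assms unfolding msg_strat_def act_strat_def is_distr_def by simp
  finally show "(\<Sum>a\<in>UNIV. pi_of \<sigma> \<rho> w a) = 1" .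
qed

context
  fixes \<mu> :: "'w::finite \<Rightarrow> real" and uS uR :: "'a::finite \<Rightarrow> 'w \<Rightarrow> real"
    and \<sigma> :: "'w \<Rightarrow> 'm::finite \<Rightarrow> real" and \<rho> :: "'m \<Rightarrow> 'a \<Rightarrow> real"
  assumes mu_pos: "\<forall>w. \<mu> w > 0"
    and SI: "scant_indifferences uS uR"
    and JI: "jointly_inclusive uS uR"
    and PUR: "partitional_unique_response \<mu> uR"
    and S: "S_BR \<mu> uS \<sigma> \<rho>" and R: "R_BR \<mu> uR \<sigma> \<rho>"
    and opt: "\<And>\<pi>. (\<forall>w. is_distr (\<pi> w)) \<Longrightarrow> (\<forall>a b. 0 \<le> obed \<mu> uR \<pi> a b) \<Longrightarrow> opay \<mu> uS \<pi> \<le> payoff \<mu> uS \<sigma> \<rho>"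
begin

lemma ms: "msg_strat \<sigma>" using S unfolding S_BR_def by blast
lemma as: "act_strat \<rho>" using R unfolding R_BR_def by blast
lemma sig_nn: "0 \<le> \<sigma> w m" using ms unfolding msg_strat_def is_distr_def by blast
lemma rho_nn: "0 \<le> \<rho> m a" using as unfolding act_strat_def is_distr_def by blast
lemma sig_sum: "(\<Sum>m\<in>UNIV. \<sigma> w m) = 1" using ms unfolding msg_strat_def is_distr_def by blast
lemma rho_sum: "(\<Sum>a\<in>UNIV. \<rho> m a) = 1" using as unfolding act_strat_def is_distr_def by blast

lemma pi0_valid: "\<forall>w. is_distr (pi_of \<sigma> \<rho> w)" by (rule pi_valid[OF ms as])

lemma obed_term_nn: "0 \<le> \<rho> m a * (Xv \<mu> uR \<sigma> m a - Xv \<mu> uR \<sigma> m b)"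
proof (cases "\<rho> m a > 0")
  case True then show ?thesis using R_BR_msg[OF R True, of b] by simp
next
  case False then have "\<rho> m a = 0" using rho_nn[of m a] by simp
  then show ?thesis by simp
qed

lemma pi0_obed: "0 \<le> obed \<mu> uR (pi_of \<sigma> \<rho>) a b"
  unfolding obed_pi by (intro sum_nonneg obed_term_nn)

lemma obed_ge_term: "\<rho> m a * (Xv \<mu> uR \<sigma> m a - Xv \<mu> uR \<sigma> m b) \<le> obed \<mu> uR (pi_of \<sigma> \<rho>) a b"
  unfolding obed_pi by (rule member_le_sum) (auto intro: obed_term_nn)

lemma pi0_ge: "\<sigma> w m * \<rho> m c \<le> pi_of \<sigma> \<rho> w c"
  unfolding pi_of_def by (rule member_le_sum) (auto intro: mult_nonneg_nonneg sig_nn rho_nn)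

lemma opt_rho:
  assumes as': "act_strat \<rho>'" and supp: "\<forall>m c. \<rho>' m c > 0 \<longrightarrow> \<rho> m c > 0"
  shows "payoff \<mu> uS \<sigma> \<rho>' \<le> payoff \<mu> uS \<sigma> \<rho>"
proof -
  have "0 \<le> obed \<mu> uR (pi_of \<sigma> \<rho>') a b" for a b
    unfolding obed_pi
  proof (intro sum_nonneg)
    fix m
    show "0 \<le> \<rho>' m a * (Xv \<mu> uR \<sigma> m a - Xv \<mu> uR \<sigma> m b)"
    proof (cases "\<rho>' m a > 0")
      case True
      then have "\<rho> m a > 0" using supp by blast
      then show ?thesis using R_BR_msg[OF R, of m a b] True by simp
    next
      case False
      moreover have "0 \<le> \<rho>' m a" using as' unfolding act_strat_def is_distr_def by blast
      ultimately have "\<rho>' m a = 0" by simp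
      then show ?thesis by simp
    qed
  qed
  then have "opay \<mu> uS (pi_of \<sigma> \<rho>') \<le> payoff \<mu> uS \<sigma> \<rho>"
    using opt[OF pi_valid[OF ms as']] by blast
  then show ?thesis by (simp add: payoff_pi)
qed

lemma XS_le:
  assumes p0: "\<rho> m a0 > 0" and p1: "\<rho> m a1 > 0"
  shows "Xv \<mu> uS \<sigma> m a1 \<le> Xv \<mu> uS \<sigma> m a0"
proof (rule ccontr)
  assume gt: "\<not> ?thesis"
  then have ne: "a0 \<noteq> a1" by auto
  define D where "D = (\<lambda>m' c. if m' = m then \<rho> m a0 * ((if c = a1 then 1 else 0) - (if c = a0 then 1 else 0)) else (0::real))"
  define \<rho>' where "\<rho>' = (\<lambda>m c. \<rho> m c + D m c)"
  have as': "act_strat \<rho>'"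
    unfolding act_strat_def is_distr_def \<rho>'_def
  proof (intro allI conjI)
    fix m' c
    show "0 \<le> \<rho> m' c + D m' c"
      using rho_nn[of m' c] p0 ne unfolding D_def by (auto simp: less_imp_le)
  next
    fix m'
    have "(\<Sum>c\<in>UNIV. D m' c) = 0"
      unfolding D_def using sum_delta_diff[of "\<rho> m a0" a1 a0 "\<lambda>_. 1"] by (cases "m' = m") simp_all
    then show "(\<Sum>c\<in>UNIV. \<rho> m' c + D m' c) = 1"
      using rho_sum[of m'] by (simp add: sum.distrib)
  qed
  have supp: "\<forall>m' c. \<rho>' m' c > 0 \<longrightarrow> \<rho> m' c > 0"
    unfolding \<rho>'_def D_def using ne p1 by auto
  have "payoff \<mu> uS \<sigma> \<rho>' = payoff \<mu> uS \<sigma> \<rho> + (\<Sum>m'\<in>UNIV. \<Sum>c\<in>UNIV. D m' c * Xv \<mu> uS \<sigma> m' c)"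
    unfolding \<rho>'_def by (rule payoff_lin_rho)
  also have "(\<Sum>m'\<in>UNIV. \<Sum>c\<in>UNIV. D m' c * Xv \<mu> uS \<sigma> m' c) = (\<Sum>c\<in>UNIV. D m c * Xv \<mu> uS \<sigma> m c)"
    by (subst sum.remove[of UNIV m]) (auto simp: D_def)
  also have "\<dots> = \<rho> m a0 * (Xv \<mu> uS \<sigma> m a1 - Xv \<mu> uS \<sigma> m a0)"
    unfolding D_def using sum_delta_diff[of "\<rho> m a0" a1 a0 "Xv \<mu> uS \<sigma> m"] by simp
  finally have "payoff \<mu> uS \<sigma> \<rho>' > payoff \<mu> uS \<sigma> \<rho>" using gt p0 by simp
  then show False using opt_rho[OF as' supp] by simp
qed


lemma supp_single:
  assumes sw: "\<sigma> w m > 0" and p0: "\<rho> m a0 > 0" and p1: "\<rho> m a1 > 0"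
  shows "a0 = a1"
proof (rule ccontr)
  assume ne: "a0 \<noteq> a1"
  define X where "X = Xv \<mu> uR \<sigma> m"
  define x :: "real^'w" where "x = (\<chi> w. \<mu> w * \<sigma> w m)"
  have x0: "x \<noteq> 0"
  proof
    assume "x = 0"
    then have "x $ w = 0" by simp
    then show False using sw mu_pos[rule_format, of w] unfolding x_def by simp
  qed
  have Xa1: "X a1 = X a0"
    using R_BR_msg[OF R p0, of a1] R_BR_msg[OF R p1, of a0] unfolding X_def by simp
  have Ss: "Xv \<mu> uS \<sigma> m a1 = Xv \<mu> uS \<sigma> m a0"
    using XS_le[OF p0 p1] XS_le[OF p1 p0] by simp
  define B where "B = {b. b \<noteq> a0 \<and> X b = X a0}"
  define I where "I = (\<lambda>b. Inl (b, False)) ` B \<union> {Inl (a1, True)} \<union> Inr ` {w. \<sigma> w m = 0}"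
  have IT: "I \<subseteq> T_labels a0" unfolding I_def T_labels_def B_def using ne by auto
  have l1: "Inl (a1, True) \<in> I" unfolding I_def by simp
  have xdot: "x \<bullet> T_row uS uR a0 (Inl (b, t)) = (if t then Xv \<mu> uS \<sigma> m b - Xv \<mu> uS \<sigma> m a0 else X b - X a0)" for b t
    by (cases t) (simp_all add: row_S row_R x_def X_def Xv_def sum_subtractf[symmetric] algebra_simps)
  have xo: "\<forall>l\<in>I. x \<bullet> T_row uS uR a0 l = 0"
  proof -
    have xI: "x \<bullet> T_row uS uR a0 (Inr w') = \<mu> w' * \<sigma> w' m" for w' by (simp add: row_I x_def)
    show ?thesis unfolding I_def B_def using Ss by (auto simp: xdot xI)
  qed
  obtain d where d: "\<forall>l\<in>I - {Inl (a1, True)}. d \<bullet> T_row uS uR a0 l = 0"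
      "d \<bullet> T_row uS uR a0 (Inl (a1, True)) > 0"
    using scant_dir[OF SI IT l1 x0 xo] by blast
  define Z where "Z = (\<lambda>b. \<Sum>w\<in>UNIV. d $ w * (uR b w - uR a0 w))"
  have dz: "d $ w' = 0" if "\<sigma> w' m = 0" for w'
  proof -
    have "Inr w' \<in> I - {Inl (a1, True)}" unfolding I_def using that by auto
    then have "d \<bullet> T_row uS uR a0 (Inr w') = 0" using d(1) by blast
    then show ?thesis by (simp add: row_I)
  qed
  have Z0: "Z b = 0" if "X b = X a0" for b
  proof (cases "b = a0")
    case True then show ?thesis unfolding Z_def by simp
  next
    case False
    then have "Inl (b, False) \<in> I - {Inl (a1, True)}" unfolding I_def B_def using that by auto
    then have "d \<bullet> T_row uS uR a0 (Inl (b, False)) = 0" using d(1) by blast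
    then show ?thesis unfolding Z_def by (simp add: row_R)
  qed
  have dS: "(\<Sum>w\<in>UNIV. d $ w * (uS a1 w - uS a0 w)) > 0" using d(2) by (simp add: row_S)
  have Zdiff: "(\<Sum>w\<in>UNIV. d $ w * (uR c w - uR b w)) = Z c - Z b" for c b
    unfolding Z_def by (simp add: sum_subtractf[symmetric] algebra_simps)
  define K where "K = (\<lambda>c. (if c = a1 then 1 else 0) - (if c = a0 then 1 else (0::real)))"
  define Dp where "Dp = (\<lambda>e w c. e * (d $ w / \<mu> w) * K c)"
  define pe where "pe = (\<lambda>e w c. pi_of \<sigma> \<rho> w c + Dp e w c)"
  have Ksum: "(\<Sum>c\<in>UNIV. K c * f c) = f a1 - f a0" for f :: "'a \<Rightarrow> real"
    using sum_delta_diff[of 1 a1 a0 f] unfolding K_def by simp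
  have pay: "opay \<mu> uS (pe e) = opay \<mu> uS (pi_of \<sigma> \<rho>) + e * (\<Sum>w\<in>UNIV. d $ w * (uS a1 w - uS a0 w))" for e
  proof -
    have "(\<Sum>w\<in>UNIV. \<Sum>c\<in>UNIV. \<mu> w * Dp e w c * uS c w) = (\<Sum>w\<in>UNIV. e * d $ w * (\<Sum>c\<in>UNIV. K c * uS c w))"
    proof (rule sum.cong[OF refl])
      fix w
      have "\<mu> w \<noteq> 0" using mu_pos by (metis less_irrefl)
      then show "(\<Sum>c\<in>UNIV. \<mu> w * Dp e w c * uS c w) = e * d $ w * (\<Sum>c\<in>UNIV. K c * uS c w)"
        unfolding Dp_def by (simp add: sum_distrib_left algebra_simps)
    qed
    also have "\<dots> = e * (\<Sum>w\<in>UNIV. d $ w * (uS a1 w - uS a0 w))"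
      by (simp add: Ksum sum_distrib_left algebra_simps)
    finally show ?thesis unfolding pe_def opay_pert by simp
  qed
  have ob: "obed \<mu> uR (pe e) c b = obed \<mu> uR (pi_of \<sigma> \<rho>) c b + e * (K c * (Z c - Z b))" for e c b
  proof -
    have "(\<Sum>w\<in>UNIV. \<mu> w * Dp e w c * (uR c w - uR b w)) = (\<Sum>w\<in>UNIV. e * K c * (d $ w * (uR c w - uR b w)))"
    proof (rule sum.cong[OF refl])
      fix w
      have "\<mu> w \<noteq> 0" using mu_pos by (metis less_irrefl)
      then show "\<mu> w * Dp e w c * (uR c w - uR b w) = e * K c * (d $ w * (uR c w - uR b w))"
        unfolding Dp_def by (simp add: algebra_simps)
    qed
    also have "\<dots> = e * (K c * (Z c - Z b))"
      by (simp add: sum_distrib_left[symmetric] Zdiff)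
    finally show ?thesis unfolding pe_def obed_pert by simp
  qed
  have E1: "\<forall>\<^sub>F e in at_right 0. 0 \<le> pe e w c" for w c
  proof -
    have "0 < pi_of \<sigma> \<rho> w c \<or> (0 \<le> pi_of \<sigma> \<rho> w c \<and> 0 \<le> (d $ w / \<mu> w) * K c)"
    proof (cases "K c = 0 \<or> d $ w = 0")
      case True
      then show ?thesis using pi0_valid unfolding is_distr_def by auto
    next
      case False
      then have "c = a0 \<or> c = a1" unfolding K_def by (auto split: if_splits)
      moreover have "\<sigma> w m > 0"
      proof (rule ccontr)
        assume "\<not> \<sigma> w m > 0"
        then have "\<sigma> w m = 0" using sig_nn[of w m] by simp
        then show False using False dz by blast
      qed
      ultimately have "0 < \<sigma> w m * \<rho> m c" using p0 p1 by auto
      then show ?thesis using pi0_ge[of w m c] by simp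
    qed
    then have "\<forall>\<^sub>F e in at_right 0. 0 \<le> pi_of \<sigma> \<rho> w c + e * ((d $ w / \<mu> w) * K c)"
      by (rule ev_pos)
    then show ?thesis unfolding pe_def Dp_def by (simp add: algebra_simps)
  qed
  have E2: "\<forall>\<^sub>F e in at_right 0. 0 \<le> obed \<mu> uR (pe e) c b" for c b
  proof -
    have "0 < obed \<mu> uR (pi_of \<sigma> \<rho>) c b \<or> (0 \<le> obed \<mu> uR (pi_of \<sigma> \<rho>) c b \<and> 0 \<le> K c * (Z c - Z b))"
    proof (cases "K c = 0 \<or> X b = X a0")
      case True
      moreover have "X b = X a0 \<Longrightarrow> K c * (Z c - Z b) = 0"
        unfolding K_def using Z0 Xa1 by auto
      ultimately show ?thesis using pi0_obed by auto
    next
      case False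
      then have cc: "c = a0 \<or> c = a1" unfolding K_def by (auto split: if_splits)
      have "X b \<le> X a0" using R_BR_msg[OF R p0] unfolding X_def by blast
      then have lt: "X b < X a0" using False by simp
      have "0 < \<rho> m c * (X c - X b)" using cc p0 p1 lt Xa1 by auto
      then show ?thesis using obed_ge_term[of m c b] unfolding X_def by simp
    qed
    then show ?thesis unfolding ob by (rule ev_pos)
  qed
  have "\<forall>\<^sub>F e in at_right 0. (\<forall>w c. 0 \<le> pe e w c) \<and> (\<forall>c b. 0 \<le> obed \<mu> uR (pe e) c b)"
    by (intro eventually_conj eventually_all_finite E1 E2)
  then obtain e where e: "e > 0" "\<forall>w c. 0 \<le> pe e w c" "\<forall>c b. 0 \<le> obed \<mu> uR (pe e) c b"
    using ev_witness by blast
  have valid: "\<forall>w. is_distr (pe e w)"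
    unfolding is_distr_def
  proof (intro allI conjI)
    fix w c show "0 \<le> pe e w c" using e by blast
  next
    fix w
    have "(\<Sum>c\<in>UNIV. Dp e w c) = 0"
    proof -
      have "(\<Sum>c\<in>UNIV. Dp e w c) = (e * (d $ w / \<mu> w)) * (\<Sum>c\<in>UNIV. K c * 1)"
        unfolding Dp_def by (simp add: sum_distrib_left)
      then show ?thesis using Ksum[of "\<lambda>_. 1"] by simp
    qed
    then show "(\<Sum>c\<in>UNIV. pe e w c) = 1"
      using pi0_valid unfolding pe_def is_distr_def by (simp add: sum.distrib)
  qed
  have "opay \<mu> uS (pe e) \<le> payoff \<mu> uS \<sigma> \<rho>" using opt[OF valid] e(3) by blast
  moreover have "opay \<mu> uS (pe e) > payoff \<mu> uS \<sigma> \<rho>"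
    unfolding pay payoff_pi using e(1) dS by simp
  ultimately show False by simp
qed


lemma pos_exists:
  fixes p :: "'c::finite \<Rightarrow> real"
  assumes "(\<Sum>c\<in>UNIV. p c) = 1"
  shows "\<exists>c. p c > 0"
proof (rule ccontr)
  assume "\<not> ?thesis"
  then have "(\<Sum>c\<in>UNIV. p c) \<le> 0" by (intro sum_nonpos) (simp add: not_less)
  then show False using assms by simp
qed

lemma exists_msg: "\<exists>m. \<sigma> w m > 0" using pos_exists[OF sig_sum] .

lemma pure:
  assumes sw: "\<sigma> w m > 0"
  shows "\<exists>a. \<forall>c. \<rho> m c = (if c = a then 1 else 0)"
proof -
  obtain a where a: "\<rho> m a > 0" using pos_exists[OF rho_sum] by blast
  have z: "\<rho> m c = 0" if "c \<noteq> a" for c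
  proof (rule ccontr)
    assume "\<rho> m c \<noteq> 0"
    then have "\<rho> m c > 0" using rho_nn[of m c] by simp
    then show False using supp_single[OF sw a] that by blast
  qed
  have "(\<Sum>c\<in>UNIV. \<rho> m c) = (\<Sum>c\<in>UNIV. if c = a then \<rho> m a else 0)"
    by (rule sum.cong) (auto simp: z)
  then have "\<rho> m a = 1" using rho_sum[of m] by simp
  then show ?thesis using z by (intro exI[of _ a]) auto
qed

lemma vv_pure: "(\<forall>c. \<rho> m c = (if c = a then 1 else 0)) \<Longrightarrow> vv uS \<rho> m w = uS a w"
  unfolding vv_def by (simp add: if_distrib[of "\<lambda>x. x * _"] cong: if_cong)

lemma det: "\<exists>a. \<forall>m. \<sigma> w m > 0 \<longrightarrow> (\<forall>c. \<rho> m c = (if c = a then 1 else 0))"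
proof -
  obtain m0 where m0: "\<sigma> w m0 > 0" using exists_msg by blast
  obtain a where a: "\<forall>c. \<rho> m0 c = (if c = a then 1 else 0)" using pure[OF m0] by blast
  have "\<forall>c. \<rho> m c = (if c = a then 1 else 0)" if sm: "\<sigma> w m > 0" for m
  proof -
    obtain a' where a': "\<forall>c. \<rho> m c = (if c = a' then 1 else 0)" using pure[OF sm] by blast
    have "vv uS \<rho> m w \<le> vv uS \<rho> m0 w" "vv uS \<rho> m0 w \<le> vv uS \<rho> m w"
      using S_BR_state[OF S _ m0] S_BR_state[OF S _ sm] mu_pos by blast+
    then have "uS a' w = uS a w" using vv_pure[OF a] vv_pure[OF a'] by simp
    then have "a' = a" using distinct_uS[OF SI] by metis
    then show ?thesis using a' by simp
  qed
  then show ?thesis by blast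
qed

lemma main_felicitous: "felicitous \<mu> uS uR"
proof -
  obtain aw where aw: "\<And>w m. \<sigma> w m > 0 \<Longrightarrow> (\<forall>c. \<rho> m c = (if c = aw w then 1 else 0))"
    using det by metis
  have pi0_det: "pi_of \<sigma> \<rho> w c = (if c = aw w then 1 else 0)" for w c
  proof -
    have "pi_of \<sigma> \<rho> w c = (\<Sum>m\<in>UNIV. \<sigma> w m * (if c = aw w then 1 else 0))"
      unfolding pi_of_def
    proof (rule sum.cong[OF refl])
      fix m
      show "\<sigma> w m * \<rho> m c = \<sigma> w m * (if c = aw w then 1 else 0)"
      proof (cases "\<sigma> w m > 0")
        case True then show ?thesis using aw[OF True] by simp
      next
        case False then have "\<sigma> w m = 0" using sig_nn[of w m] by simp
        then show ?thesis by simp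
      qed
    qed
    also have "\<dots> = (if c = aw w then 1 else 0)" by (simp add: sum_distrib_right[symmetric] sig_sum)
    finally show ?thesis .
  qed
  define f where "f = (\<lambda>c b. \<Sum>w\<in>{w. aw w = c}. \<mu> w * uR b w)"
  have obed_f: "obed \<mu> uR (pi_of \<sigma> \<rho>) c b = f c c - f c b" for c b
  proof -
    have "obed \<mu> uR (pi_of \<sigma> \<rho>) c b = (\<Sum>w\<in>UNIV. if aw w = c then \<mu> w * uR c w - \<mu> w * uR b w else 0)"
      unfolding obed_def pi0_det by (rule sum.cong) (auto simp: algebra_simps)
    also have "\<dots> = (\<Sum>w\<in>{w. aw w = c}. \<mu> w * uR c w - \<mu> w * uR b w)"
      by (simp add: sum.inter_filter[symmetric])
    also have "\<dots> = f c c - f c b" unfolding f_def by (simp add: sum_subtractf)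
    finally show ?thesis .
  qed
  have fle: "f c b \<le> f c c" for c b using pi0_obed[of c b] obed_f by simp
  have strict: "0 < obed \<mu> uR (pi_of \<sigma> \<rho>) c b" if cb: "c \<noteq> b" and w0: "aw w0 = c" for c b w0
  proof -
    have "c \<in> argmax_set (f c)" unfolding argmax_set_def using fle by blast
    moreover have "is_singleton (argmax_set (f c))"
    proof -
      have "{w. aw w = c} \<noteq> {}" using w0 by auto
      note PUR[unfolded partitional_unique_response_def, rule_format, OF this]
      then show ?thesis unfolding f_def .
    qed
    ultimately have "argmax_set (f c) = {c}"
      unfolding is_singleton_def by (metis singletonD)
    then have "b \<notin> argmax_set (f c)" using cb by auto
    then obtain b' where "f c b < f c b'" unfolding argmax_set_def by (auto simp: not_le)
    then have "f c b < f c c" using fle[of c b'] by simp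
    then show ?thesis unfolding obed_f by simp
  qed
  have top: "aw \<omega> = c" if JIc: "\<forall>a'. a' \<noteq> c \<longrightarrow> uS a' \<omega> < uS c \<omega> \<and> uR a' \<omega> < uR c \<omega>" for c \<omega>
  proof (rule ccontr)
    assume ne: "aw \<omega> \<noteq> c"
    define a' where "a' = aw \<omega>"
    have ne': "c \<noteq> a'" using ne unfolding a'_def by simp
    define K where "K = (\<lambda>x. (if x = c then 1 else 0) - (if x = a' then 1 else (0::real)))"
    have Ksum: "(\<Sum>x\<in>UNIV. K x * g x) = g c - g a'" for g :: "'a \<Rightarrow> real"
      using sum_delta_diff[of 1 c a' g] unfolding K_def by simp
    define Dp where "Dp = (\<lambda>e w x. if w = \<omega> then e * K x else (0::real))"
    define pe where "pe = (\<lambda>e w x. pi_of \<sigma> \<rho> w x + Dp e w x)"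
    have pay: "opay \<mu> uS (pe e) = opay \<mu> uS (pi_of \<sigma> \<rho>) + e * (\<mu> \<omega> * (uS c \<omega> - uS a' \<omega>))" for e
    proof -
      have "(\<Sum>w\<in>UNIV. \<Sum>x\<in>UNIV. \<mu> w * Dp e w x * uS x w) = (\<Sum>x\<in>UNIV. \<mu> \<omega> * Dp e \<omega> x * uS x \<omega>)"
        by (subst sum.remove[of UNIV \<omega>]) (auto simp: Dp_def)
      also have "\<dots> = (e * \<mu> \<omega>) * (\<Sum>x\<in>UNIV. K x * uS x \<omega>)"
        unfolding Dp_def by (simp add: sum_distrib_left algebra_simps)
      finally show ?thesis unfolding pe_def opay_pert Ksum by (simp add: algebra_simps)
    qed
    have ob: "obed \<mu> uR (pe e) x b = obed \<mu> uR (pi_of \<sigma> \<rho>) x b + e * (\<mu> \<omega> * K x * (uR x \<omega> - uR b \<omega>))" for e x b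
    proof -
      have "(\<Sum>w\<in>UNIV. \<mu> w * Dp e w x * (uR x w - uR b w)) = \<mu> \<omega> * Dp e \<omega> x * (uR x \<omega> - uR b \<omega>)"
        by (subst sum.remove[of UNIV \<omega>]) (auto simp: Dp_def)
      then show ?thesis unfolding pe_def obed_pert by (simp add: Dp_def algebra_simps)
    qed
    have E1: "\<forall>\<^sub>F e in at_right 0. 0 \<le> pe e w x" for w x
    proof -
      have "0 < pi_of \<sigma> \<rho> w x \<or> (0 \<le> pi_of \<sigma> \<rho> w x \<and> 0 \<le> (if w = \<omega> then K x else 0))"
        using ne' unfolding K_def a'_def by (auto simp: pi0_det)
      then have "\<forall>\<^sub>F e in at_right 0. 0 \<le> pi_of \<sigma> \<rho> w x + e * (if w = \<omega> then K x else 0)"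
        by (rule ev_pos)
      then show ?thesis unfolding pe_def Dp_def by (simp add: if_distrib[of "\<lambda>y. _ * y"] cong: if_cong)
    qed
    have E2: "\<forall>\<^sub>F e in at_right 0. 0 \<le> obed \<mu> uR (pe e) x b" for x b
    proof -
      have "0 < obed \<mu> uR (pi_of \<sigma> \<rho>) x b \<or> (0 \<le> obed \<mu> uR (pi_of \<sigma> \<rho>) x b \<and> 0 \<le> \<mu> \<omega> * K x * (uR x \<omega> - uR b \<omega>))"
      proof (cases "x = a' \<and> b \<noteq> a'")
        case True
        then have "a' \<noteq> b" "x = a'" by auto
        then have "0 < obed \<mu> uR (pi_of \<sigma> \<rho>) x b" using strict[of a' b \<omega>] unfolding a'_def by blast
        then show ?thesis by blast
      next
        case False
        have "0 \<le> K x * (uR x \<omega> - uR b \<omega>)"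
        proof (cases "x = c")
          case True
          then have "0 \<le> uR x \<omega> - uR b \<omega>" using JIc by (cases "b = c") (auto simp: less_imp_le)
          then show ?thesis using True ne' unfolding K_def by simp
        next
          case False2: False
          then show ?thesis using False unfolding K_def by auto
        qed
        then have "0 \<le> \<mu> \<omega> * (K x * (uR x \<omega> - uR b \<omega>))" using mu_pos by (simp add: less_imp_le)
        then show ?thesis using pi0_obed[of x b] by (simp add: mult.assoc)
      qed
      then show ?thesis unfolding ob by (rule ev_pos)
    qed
    have "\<forall>\<^sub>F e in at_right 0. (\<forall>w x. 0 \<le> pe e w x) \<and> (\<forall>x b. 0 \<le> obed \<mu> uR (pe e) x b)"
      by (intro eventually_conj eventually_all_finite E1 E2)
    then obtain e where e: "e > 0" "\<forall>w x. 0 \<le> pe e w x" "\<forall>x b. 0 \<le> obed \<mu> uR (pe e) x b"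
      using ev_witness by blast
    have valid: "\<forall>w. is_distr (pe e w)"
      unfolding is_distr_def
    proof (intro allI conjI)
      fix w x show "0 \<le> pe e w x" using e by blast
    next
      fix w
      have "(\<Sum>x\<in>UNIV. Dp e w x) = 0"
      proof (cases "w = \<omega>")
        case True
        have "(\<Sum>x\<in>UNIV. Dp e w x) = e * (\<Sum>x\<in>UNIV. K x * 1)"
          unfolding Dp_def using True by (simp add: sum_distrib_left)
        then show ?thesis using Ksum[of "\<lambda>_. 1"] by simp
      next
        case False then show ?thesis unfolding Dp_def by simp
      qed
      then show "(\<Sum>x\<in>UNIV. pe e w x) = 1"
        using pi0_valid unfolding pe_def is_distr_def by (simp add: sum.distrib)
    qed
    have "opay \<mu> uS (pe e) \<le> payoff \<mu> uS \<sigma> \<rho>" using opt[OF valid] e(3) by blast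
    moreover have "0 < e * (\<mu> \<omega> * (uS c \<omega> - uS a' \<omega>))"
      using e(1) mu_pos JIc ne' by (auto intro!: mult_pos_pos)
    ultimately show False unfolding pay payoff_pi by simp
  qed
  have best: "uS c w \<le> uS (aw w) w" for c w
  proof -
    obtain \<omega> where JIc: "\<forall>a'. a' \<noteq> c \<longrightarrow> uS a' \<omega> < uS c \<omega> \<and> uR a' \<omega> < uR c \<omega>"
      using JI unfolding jointly_inclusive_def by blast
    have t: "aw \<omega> = c" by (rule top[OF JIc])
    obtain m where m: "\<sigma> \<omega> m > 0" using exists_msg by blast
    obtain mw where mw: "\<sigma> w mw > 0" using exists_msg by blast
    have "vv uS \<rho> m w \<le> vv uS \<rho> mw w" using S_BR_state[OF S _ mw] mu_pos by blast
    then show ?thesis using vv_pure[OF aw[OF m]] vv_pure[OF aw[OF mw]] t by simp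
  qed
  show ?thesis
    unfolding felicitous_def Let_def
  proof (intro allI impI)
    fix a
    have Weq: "{w. a \<in> argmax_set (\<lambda>a'. uS a' w)} = {w. aw w = a}"
    proof (intro set_eqI iffI; simp)
      fix w assume "a \<in> argmax_set (\<lambda>a'. uS a' w)"
      then have "uS (aw w) w \<le> uS a w" unfolding argmax_set_def by blast
      then have "uS (aw w) w = uS a w" using best[of a w] by simp
      then show "aw w = a" using distinct_uS[OF SI] by metis
    next
      fix w assume "aw w = a"
      then show "a \<in> argmax_set (\<lambda>a'. uS a' w)" unfolding argmax_set_def using best by auto
    qed
    show "a \<in> argmax_set (\<lambda>a'. \<Sum>w\<in>{w. a \<in> argmax_set (\<lambda>a'. uS a' w)}. \<mu> w * uR a' w)"
      unfolding Weq unfolding argmax_set_def using fle[of a] unfolding f_def by blast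
  qed
qed

end



definition sg :: "real^('w::finite \<times> 'm::finite) \<Rightarrow> 'w \<Rightarrow> 'm \<Rightarrow> real" where
  "sg X = (\<lambda>w m. X $ (w, m))"

lemma sg_surj: "\<sigma> = sg (\<chi> p. \<sigma> (fst p) (snd p))"
  unfolding sg_def by simp

lemma cont_payoff:
  fixes A :: "'z::topological_space \<Rightarrow> 'w::finite \<Rightarrow> 'm::finite \<Rightarrow> real" and B :: "'z \<Rightarrow> 'm \<Rightarrow> 'a::finite \<Rightarrow> real"
  assumes "\<And>w m. continuous_on UNIV (\<lambda>z. A z w m)" "\<And>m a. continuous_on UNIV (\<lambda>z. B z m a)"
  shows "continuous_on UNIV (\<lambda>z. payoff \<mu> u (A z) (B z))"
  unfolding payoff_def by (intro continuous_intros assms)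

lemma closed_ms:
  fixes A :: "'z::topological_space \<Rightarrow> 'w::finite \<Rightarrow> 'm::finite \<Rightarrow> real"
  assumes "\<And>w m. continuous_on UNIV (\<lambda>z. A z w m)"
  shows "closed {z. msg_strat (A z)}"
  unfolding msg_strat_def is_distr_def
  by (intro closed_Collect_all closed_Collect_conj closed_Collect_le closed_Collect_eq continuous_intros assms)

lemma closed_as:
  fixes B :: "'z::topological_space \<Rightarrow> 'm::finite \<Rightarrow> 'a::finite \<Rightarrow> real"
  assumes "\<And>m a. continuous_on UNIV (\<lambda>z. B z m a)"
  shows "closed {z. act_strat (B z)}"
  unfolding act_strat_def is_distr_def
  by (intro closed_Collect_all closed_Collect_conj closed_Collect_le closed_Collect_eq continuous_intros assms)

lemma closed_SBR:
  fixes A :: "'z::topological_space \<Rightarrow> 'w::finite \<Rightarrow> 'm::finite \<Rightarrow> real" and B :: "'z \<Rightarrow> 'm \<Rightarrow> 'a::finite \<Rightarrow> real"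
  assumes "\<And>w m. continuous_on UNIV (\<lambda>z. A z w m)" "\<And>m a. continuous_on UNIV (\<lambda>z. B z m a)"
  shows "closed {z. S_BR \<mu> u (A z) (B z)}"
  unfolding S_BR_def
  by (intro closed_Collect_conj closed_ms closed_Collect_all closed_Collect_imp open_Collect_const
      closed_Collect_le cont_payoff continuous_intros assms)

lemma closed_RBR:
  fixes A :: "'z::topological_space \<Rightarrow> 'w::finite \<Rightarrow> 'm::finite \<Rightarrow> real" and B :: "'z \<Rightarrow> 'm \<Rightarrow> 'a::finite \<Rightarrow> real"
  assumes "\<And>w m. continuous_on UNIV (\<lambda>z. A z w m)" "\<And>m a. continuous_on UNIV (\<lambda>z. B z m a)"
  shows "closed {z. R_BR \<mu> u (A z) (B z)}"
  unfolding R_BR_def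
  by (intro closed_Collect_conj closed_as closed_Collect_all closed_Collect_imp open_Collect_const
      closed_Collect_le cont_payoff continuous_intros assms)


lemma babbling:
  fixes \<mu> :: "'w::finite \<Rightarrow> real" and uS uR :: "'a::finite \<Rightarrow> 'w \<Rightarrow> real"
  shows "\<exists>(\<sigma>::'w \<Rightarrow> 'm::finite \<Rightarrow> real) \<rho>. S_BR \<mu> uS \<sigma> \<rho> \<and> R_BR \<mu> uR \<sigma> \<rho>"
proof -
  define Y where "Y = (\<lambda>a. \<Sum>w\<in>UNIV. \<mu> w * uR a w)"
  have "Max (range Y) \<in> range Y" by (rule Max_in) auto
  then obtain as where as_eq: "Y as = Max (range Y)" by (metis rangeE)
  have Yle: "Y a \<le> Y as" for a unfolding as_eq by (rule Max_ge) auto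
  define m0 :: 'm where "m0 = undefined"
  define \<sigma> :: "'w \<Rightarrow> 'm \<Rightarrow> real" where "\<sigma> = (\<lambda>w m. if m = m0 then 1 else 0)"
  define \<rho> :: "'m \<Rightarrow> 'a \<Rightarrow> real" where "\<rho> = (\<lambda>m a. if a = as then 1 else 0)"
  have ms: "msg_strat \<sigma>" unfolding msg_strat_def is_distr_def \<sigma>_def by simp
  have as: "act_strat \<rho>" unfolding act_strat_def is_distr_def \<rho>_def by simp
  have Spay: "payoff \<mu> uS \<sigma>' \<rho> = (\<Sum>w\<in>UNIV. \<mu> w * uS as w)" if "msg_strat \<sigma>'" for \<sigma>'
  proof -
    have vv: "vv uS \<rho> m w = uS as w" for m w
      unfolding vv_def \<rho>_def by (simp add: if_distrib[of "\<lambda>x. x * _"] cong: if_cong)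
    have "payoff \<mu> uS \<sigma>' \<rho> = (\<Sum>w\<in>UNIV. \<mu> w * uS as w * (\<Sum>m\<in>UNIV. \<sigma>' w m))"
      unfolding payoff_alt2 vv by (simp add: sum_distrib_left sum_distrib_right algebra_simps)
    then show ?thesis using that unfolding msg_strat_def is_distr_def by simp
  qed
  have S: "S_BR \<mu> uS \<sigma> \<rho>" unfolding S_BR_def using ms Spay by simp
  have Rpay: "payoff \<mu> uR \<sigma> \<rho>' = (\<Sum>a\<in>UNIV. \<rho>' m0 a * Y a)" for \<rho>'
  proof -
    have X: "Xv \<mu> uR \<sigma> m a = (if m = m0 then Y a else 0)" for m a
      unfolding Xv_def \<sigma>_def Y_def by simp
    have "payoff \<mu> uR \<sigma> \<rho>' = (\<Sum>m\<in>UNIV. if m = m0 then (\<Sum>a\<in>UNIV. \<rho>' m a * Y a) else 0)"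
      unfolding payoff_alt1 X by (rule sum.cong) auto
    then show ?thesis by simp
  qed
  have R: "R_BR \<mu> uR \<sigma> \<rho>"
    unfolding R_BR_def
  proof (intro conjI allI impI)
    show "act_strat \<rho>" by (rule as)
  next
    fix \<rho>' :: "'m \<Rightarrow> 'a \<Rightarrow> real" assume as': "act_strat \<rho>'"
    have "payoff \<mu> uR \<sigma> \<rho>' \<le> (\<Sum>a\<in>UNIV. \<rho>' m0 a * Y as)"
      unfolding Rpay by (intro sum_mono mult_left_mono Yle) (use as' in \<open>auto simp: act_strat_def is_distr_def\<close>)
    also have "\<dots> = Y as" using as' by (simp add: sum_distrib_right[symmetric] act_strat_def is_distr_def)
    also have "\<dots> = payoff \<mu> uR \<sigma> \<rho>" unfolding Rpay \<rho>_def by (simp add: if_distrib[of "\<lambda>x. x * _"] cong: if_cong)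
    finally show "payoff \<mu> uR \<sigma> \<rho>' \<le> payoff \<mu> uR \<sigma> \<rho>" .
  qed
  show ?thesis using S R by blast
qed

lemma eq_max:
  fixes \<mu> :: "'w::finite \<Rightarrow> real" and uS uR :: "'a::finite \<Rightarrow> 'w \<Rightarrow> real"
  shows "\<exists>(\<sigma>::'w \<Rightarrow> 'm::finite \<Rightarrow> real) \<rho>. S_BR \<mu> uS \<sigma> \<rho> \<and> R_BR \<mu> uR \<sigma> \<rho> \<and>
     (\<forall>(\<sigma>'::'w \<Rightarrow> 'm \<Rightarrow> real) \<rho>'. S_BR \<mu> uS \<sigma>' \<rho>' \<and> R_BR \<mu> uR \<sigma>' \<rho>' \<longrightarrow> payoff \<mu> uS \<sigma>' \<rho>' \<le> payoff \<mu> uS \<sigma> \<rho>)"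
proof -
  define K where "K = {z :: (real^('w \<times> 'm)) \<times> (real^('m \<times> 'a)). S_BR \<mu> uS (sg (fst z)) (sg (snd z)) \<and> R_BR \<mu> uR (sg (fst z)) (sg (snd z))}"
  have c1: "continuous_on UNIV (\<lambda>z :: (real^('w \<times> 'm)) \<times> (real^('m \<times> 'a)). sg (fst z) w m)" for w m
    unfolding sg_def by (intro continuous_intros)
  have c2: "continuous_on UNIV (\<lambda>z :: (real^('w \<times> 'm)) \<times> (real^('m \<times> 'a)). sg (snd z) m a)" for m a
    unfolding sg_def by (intro continuous_intros)
  have closed: "closed K"
    unfolding K_def by (intro closed_Collect_conj closed_SBR closed_RBR c1 c2)
  have sub: "K \<subseteq> cbox 0 (\<chi> i. 1) \<times> cbox 0 (\<chi> i. 1)"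
  proof
    fix z assume "z \<in> K"
    then have ms: "msg_strat (sg (fst z))" and as: "act_strat (sg (snd z))"
      unfolding K_def S_BR_def R_BR_def by auto
    have "0 \<le> fst z $ (w, m) \<and> fst z $ (w, m) \<le> 1" for w m
    proof -
      have d: "is_distr (\<lambda>m. fst z $ (w, m))" using ms unfolding msg_strat_def sg_def by blast
      then have "fst z $ (w, m) \<le> (\<Sum>m'\<in>UNIV. fst z $ (w, m'))"
        unfolding is_distr_def by (intro member_le_sum) auto
      then show ?thesis using d unfolding is_distr_def by auto
    qed
    moreover have "0 \<le> snd z $ (m, a) \<and> snd z $ (m, a) \<le> 1" for m a
    proof -
      have d: "is_distr (\<lambda>a. snd z $ (m, a))" using as unfolding act_strat_def sg_def by blast
      then have "snd z $ (m, a) \<le> (\<Sum>a'\<in>UNIV. snd z $ (m, a'))"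
        unfolding is_distr_def by (intro member_le_sum) auto
      then show ?thesis using d unfolding is_distr_def by auto
    qed
    ultimately show "z \<in> cbox 0 (\<chi> i. 1) \<times> cbox 0 (\<chi> i. 1)"
      by (cases z) (auto simp: mem_box_cart)
  qed
  have "bounded K" by (rule bounded_subset[OF bounded_Times[OF bounded_cbox bounded_cbox] sub])
  then have cK: "compact K" using closed by (simp add: compact_eq_bounded_closed)
  define f where "f = (\<lambda>z :: (real^('w \<times> 'm)) \<times> (real^('m \<times> 'a)). payoff \<mu> uS (sg (fst z)) (sg (snd z)))"
  have cf: "continuous_on UNIV f" unfolding f_def by (intro cont_payoff c1 c2)
  have cfK: "compact (f ` K)" by (rule compact_continuous_image[OF continuous_on_subset[OF cf] cK]) auto
  obtain \<sigma>0 :: "'w \<Rightarrow> 'm \<Rightarrow> real" and \<rho>0 where b: "S_BR \<mu> uS \<sigma>0 \<rho>0" "R_BR \<mu> uR \<sigma>0 \<rho>0"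
    using babbling by blast
  have "((\<chi> p. \<sigma>0 (fst p) (snd p)), (\<chi> p. \<rho>0 (fst p) (snd p))) \<in> K"
    unfolding K_def using b sg_surj[of \<sigma>0] sg_surj[of \<rho>0] by simp
  then have ne: "f ` K \<noteq> {}" by blast
  obtain s where s: "s \<in> f ` K" "\<forall>t\<in>f ` K. t \<le> s" using compact_attains_sup[OF cfK ne] by blast
  then obtain z where z: "z \<in> K" "s = f z" by blast
  have all: "\<forall>(\<sigma>'::'w \<Rightarrow> 'm \<Rightarrow> real) \<rho>'. S_BR \<mu> uS \<sigma>' \<rho>' \<and> R_BR \<mu> uR \<sigma>' \<rho>' \<longrightarrow> payoff \<mu> uS \<sigma>' \<rho>' \<le> payoff \<mu> uS (sg (fst z)) (sg (snd z))"
  proof (intro allI impI)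
    fix \<sigma>' :: "'w \<Rightarrow> 'm \<Rightarrow> real" and \<rho>' :: "'m \<Rightarrow> 'a \<Rightarrow> real"
    assume e: "S_BR \<mu> uS \<sigma>' \<rho>' \<and> R_BR \<mu> uR \<sigma>' \<rho>'"
    define z' where "z' = ((\<chi> p. \<sigma>' (fst p) (snd p)), (\<chi> p. \<rho>' (fst p) (snd p)))"
    have "z' \<in> K" unfolding K_def z'_def using e sg_surj[of \<sigma>'] sg_surj[of \<rho>'] by simp
    then have "f z' \<le> s" using s(2) by blast
    moreover have "f z' = payoff \<mu> uS \<sigma>' \<rho>'" unfolding f_def z'_def using sg_surj[of \<sigma>'] sg_surj[of \<rho>'] by simp
    ultimately show "payoff \<mu> uS \<sigma>' \<rho>' \<le> payoff \<mu> uS (sg (fst z)) (sg (snd z))"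
      using z unfolding f_def by simp
  qed
  have "S_BR \<mu> uS (sg (fst z)) (sg (snd z))" "R_BR \<mu> uR (sg (fst z)) (sg (snd z))"
    using z unfolding K_def by auto
  then show ?thesis using all by blast
qed


theorem lemma8:
  fixes \<mu>0 :: "'w::finite \<Rightarrow> real"
    and uS uR :: "'a::finite \<Rightarrow> 'w \<Rightarrow> real"
    and M :: "'m::finite itself"
  assumes prior_pos: "\<forall>w. \<mu>0 w > 0"
    and prior_sum: "(\<Sum>w\<in>UNIV. \<mu>0 w) = 1"
    and card_M: "CARD('m) > max CARD('w) CARD('a)"
    and uS_range: "\<forall>a w. 0 \<le> uS a w \<and> uS a w \<le> 1"
    and uR_range: "\<forall>a w. 0 \<le> uR a w \<and> uR a w \<le> 1"
    and JI: "jointly_inclusive uS uR"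
    and PUR: "partitional_unique_response \<mu>0 uR"
    and SI: "scant_indifferences uS uR"
    and no_value: "commitment_no_value \<mu>0 uS uR M"
  shows "felicitous \<mu>0 uS uR"
proof -
  obtain \<sigma> :: "'w \<Rightarrow> 'm \<Rightarrow> real" and \<rho> :: "'m \<Rightarrow> 'a \<Rightarrow> real"
    where eqS: "S_BR \<mu>0 uS \<sigma> \<rho>" and eqR: "R_BR \<mu>0 uR \<sigma> \<rho>"
      and mx: "\<forall>(\<sigma>'::'w \<Rightarrow> 'm \<Rightarrow> real) \<rho>'. S_BR \<mu>0 uS \<sigma>' \<rho>' \<and> R_BR \<mu>0 uR \<sigma>' \<rho>' \<longrightarrow> payoff \<mu>0 uS \<sigma>' \<rho>' \<le> payoff \<mu>0 uS \<sigma> \<rho>"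
    using eq_max[of \<mu>0 uS uR] by blast
  have C: "cheap_talk_payoff \<mu>0 uS uR M = payoff \<mu>0 uS \<sigma> \<rho>"
    unfolding cheap_talk_payoff_def
    by (rule cSup_eq_maximum) (use eqS eqR mx in auto)
  have card: "CARD('a) < CARD('m)" using card_M by simp
  have mu_nn: "\<forall>w. 0 \<le> \<mu>0 w" using prior_pos by (simp add: less_imp_le)
  have u1: "\<forall>a w. uS a w \<le> 1" using uS_range by blast
  have opt: "opay \<mu>0 uS \<pi> \<le> payoff \<mu>0 uS \<sigma> \<rho>"
    if "\<forall>w. is_distr (\<pi> w)" "\<forall>a b. 0 \<le> obed \<mu>0 uR \<pi> a b" for \<pi>
  proof -
    have "opay \<mu>0 uS \<pi> \<le> persuasion_payoff \<mu>0 uS uR M"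
      by (rule pers_bound[OF card that mu_nn u1])
    then show ?thesis using no_value C unfolding commitment_no_value_def by simp
  qed
  show ?thesis
    by (rule main_felicitous[OF prior_pos SI JI PUR eqS eqR opt])
qed

end
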